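(* Let $G$ be a cubic graph and let $J_1,J_2,J_3$ be three joins of $G$. For $i\in\{0,1,2,3\}$ let $E_i$ be the set of edges of $G$ contained in precisely $i$ of the sets $J_1,J_2,J_3$. Then $$|E_0|+\sum_{i=1}^3 n(J_i)=|E_2|+2|E_3|.$$
   Context: A join of a graph $H$ is a set $J\subseteq E(H)$ such that every vertex has degree of the same parity in $H$ and in the spanning subgraph $(V(H),J)$. In a cubic graph every vertex thus has degree $1$ or $3$ in a join $J$; a vertex of degree $3$ in $J$ is called a $J$-vertex, and $n(J)$ denotes the number of $J$-vertices. *)

theory Defs
  imports Main
begin

text \<open>A finite loopless multigraph: vertex set V, edge set E, and an incidence map
  assigning to each edge its set of two distinct endpoints (parallel edges allowed).\<close>
definition multigraph :: "'v set \<Rightarrow> 'e set \<Rightarrow> ('e \<Rightarrow> 'v set) \<Rightarrow> bool" where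
  "multigraph V E ends \<longleftrightarrow> finite V \<and> finite E \<and>
     (\<forall>e\<in>E. ends e \<subseteq> V \<and> card (ends e) = 2)"

definition deg_in :: "('e \<Rightarrow> 'v set) \<Rightarrow> 'e set \<Rightarrow> 'v \<Rightarrow> nat" where
  "deg_in ends F v = card {e\<in>F. v \<in> ends e}"

definition cubic :: "'v set \<Rightarrow> 'e set \<Rightarrow> ('e \<Rightarrow> 'v set) \<Rightarrow> bool" where
  "cubic V E ends \<longleftrightarrow> multigraph V E ends \<and> (\<forall>v\<in>V. deg_in ends E v = 3)"

definition is_join :: "'v set \<Rightarrow> 'e set \<Rightarrow> ('e \<Rightarrow> 'v set) \<Rightarrow> 'e set \<Rightarrow> bool" where
  "is_join V E ends J \<longleftrightarrow> J \<subseteq> E \<and>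
     (\<forall>v\<in>V. even (deg_in ends J v) = even (deg_in ends E v))"

definition nJ :: "'v set \<Rightarrow> ('e \<Rightarrow> 'v set) \<Rightarrow> 'e set \<Rightarrow> nat" where
  "nJ V ends J = card {v\<in>V. deg_in ends J v = 3}"

definition mult3 :: "'e set \<Rightarrow> 'e set \<Rightarrow> 'e set \<Rightarrow> 'e \<Rightarrow> nat" where
  "mult3 J1 J2 J3 e = (if e \<in> J1 then 1 else 0) + (if e \<in> J2 then 1 else 0) + (if e \<in> J3 then 1 else 0)"

definition Ei :: "'e set \<Rightarrow> 'e set \<Rightarrow> 'e set \<Rightarrow> 'e set \<Rightarrow> nat \<Rightarrow> 'e set" where
  "Ei E J1 J2 J3 i = {e\<in>E. mult3 J1 J2 J3 e = i}"

end

theory Submission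
  imports Defs
begin

lemma handshake:
  assumes fin: "finite V" "finite F" and sub: "\<forall>e\<in>F. ends e \<subseteq> V \<and> card (ends e) = 2"
  shows "(\<Sum>v\<in>V. deg_in ends F v) = 2 * card F"
proof -
  have "(\<Sum>v\<in>V. deg_in ends F v) = (\<Sum>v\<in>V. \<Sum>e\<in>F. if v \<in> ends e then 1 else 0)"
    unfolding deg_in_def using fin by (simp add: sum.inter_filter[symmetric])
  also have "\<dots> = (\<Sum>e\<in>F. \<Sum>v\<in>V. if v \<in> ends e then 1 else 0)" by (rule sum.swap)
  also have "\<dots> = (\<Sum>e\<in>F. card (ends e))"
  proof (rule sum.cong)
    fix e assume "e \<in> F"
    hence "ends e \<subseteq> V" using sub by auto
    hence "{v\<in>V. v \<in> ends e} = ends e" by auto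
    thus "(\<Sum>v\<in>V. if v \<in> ends e then 1 else 0) = card (ends e)"
      using fin by (simp add: sum.inter_filter[symmetric])
  qed simp
  also have "\<dots> = 2 * card F" using sub by simp
  finally show ?thesis .
qed

lemma join_vertex:
  assumes c: "cubic V E ends" and j: "is_join V E ends J"
  shows "(\<Sum>v\<in>V. deg_in ends J v) = card V + 2 * nJ V ends J"
proof -
  have mg: "multigraph V E ends" and d3: "\<forall>v\<in>V. deg_in ends E v = 3" using c by (auto simp: cubic_def)
  have fin: "finite V" "finite E" using mg by (auto simp: multigraph_def)
  have JE: "J \<subseteq> E" using j by (simp add: is_join_def)
  have "\<forall>v\<in>V. deg_in ends J v = 1 + 2 * (if deg_in ends J v = 3 then 1 else 0)"
  proof
    fix v assume v: "v \<in> V"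
    have le: "deg_in ends J v \<le> deg_in ends E v" unfolding deg_in_def
      using JE fin by (intro card_mono) auto
    moreover have "odd (deg_in ends J v)" using j v d3 by (auto simp: is_join_def)
    ultimately show "deg_in ends J v = 1 + 2 * (if deg_in ends J v = 3 then 1 else 0)"
    proof -
      have "deg_in ends J v \<le> 3" using le d3 v by auto
      with \<open>odd (deg_in ends J v)\<close> have "deg_in ends J v = 1 \<or> deg_in ends J v = 3" by (elim oddE) presburger
      thus ?thesis by auto
    qed
  qed
  hence "(\<Sum>v\<in>V. deg_in ends J v) = (\<Sum>v\<in>V. 1 + 2 * (if deg_in ends J v = 3 then 1 else 0))"
    by (intro sum.cong) auto
  also have "\<dots> = card V + 2 * nJ V ends J"
  proof -
    have "(\<Sum>v\<in>V. 1 + 2 * (if deg_in ends J v = 3 then 1 else 0)) = card V + 2 * (\<Sum>v\<in>V. (if deg_in ends J v = 3 then 1 else 0::nat))"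
      by (simp only: sum.distrib sum_distrib_left[symmetric]) simp
    thus ?thesis unfolding nJ_def using fin by (simp add: sum.inter_filter[symmetric])
  qed
  finally show ?thesis .
qed

theorem proposition2p1:
  fixes V :: "'v set" and E :: "'e set" and ends :: "'e \<Rightarrow> 'v set"
    and J1 J2 J3 :: "'e set"
  assumes "cubic V E ends"
    and "is_join V E ends J1" and "is_join V E ends J2" and "is_join V E ends J3"
  shows "card (Ei E J1 J2 J3 0) + (nJ V ends J1 + nJ V ends J2 + nJ V ends J3)
         = card (Ei E J1 J2 J3 2) + 2 * card (Ei E J1 J2 J3 3)"
proof -
  have mg: "multigraph V E ends" and d3: "\<forall>v\<in>V. deg_in ends E v = 3" using assms(1) by (auto simp: cubic_def)
  have fin: "finite V" "finite E" and ed: "\<forall>e\<in>E. ends e \<subseteq> V \<and> card (ends e) = 2"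
    using mg by (auto simp: multigraph_def)
  have JE: "J1 \<subseteq> E" "J2 \<subseteq> E" "J3 \<subseteq> E" using assms(2-4) by (auto simp: is_join_def)
  have hs: "\<And>F. F \<subseteq> E \<Longrightarrow> (\<Sum>v\<in>V. deg_in ends F v) = 2 * card F"
    using fin ed by (intro handshake) (auto intro: finite_subset)
  have cV: "3 * card V = 2 * card E" using hs[of E] d3 by simp
  have j1: "card V + 2 * nJ V ends J1 = 2 * card J1" using hs[OF JE(1)] join_vertex[OF assms(1,2)] by simp
  have j2: "card V + 2 * nJ V ends J2 = 2 * card J2" using hs[OF JE(2)] join_vertex[OF assms(1,3)] by simp
  have j3: "card V + 2 * nJ V ends J3 = 2 * card J3" using hs[OF JE(3)] join_vertex[OF assms(1,4)] by simp
  define m where "m = mult3 J1 J2 J3"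
  have m3: "\<forall>e. m e \<le> 3" unfolding m_def mult3_def by auto
  have cardJ: "\<And>J. J \<subseteq> E \<Longrightarrow> card J = (\<Sum>e\<in>E. if e \<in> J then 1 else 0)"
  proof -
    fix J assume "J \<subseteq> E"
    hence "{e\<in>E. e \<in> J} = J" by auto
    thus "card J = (\<Sum>e\<in>E. if e \<in> J then 1 else 0)" using fin by (simp add: sum.inter_filter[symmetric])
  qed
  have sm: "(\<Sum>e\<in>E. m e) = card J1 + card J2 + card J3"
    unfolding m_def mult3_def using cardJ JE by (simp add: sum.distrib)
  have cEi: "\<And>i. card (Ei E J1 J2 J3 i) = (\<Sum>e\<in>E. if m e = i then 1 else 0)"
    unfolding Ei_def m_def using fin by (simp add: sum.inter_filter[symmetric])
  have dec1: "\<And>e. m e = (if m e = 1 then 1 else 0) + 2 * (if m e = 2 then 1 else 0) + 3 * (if m e = 3 then 1 else 0)"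
  proof -
    fix e have "m e \<le> 3" using m3 by auto
    hence "m e = 0 \<or> m e = 1 \<or> m e = 2 \<or> m e = 3" by linarith
    thus "?thesis e" by auto
  qed
  have dec2: "\<And>e. (1::nat) = (if m e = 0 then 1 else 0) + (if m e = 1 then 1 else 0) + (if m e = 2 then 1 else 0) + (if m e = 3 then 1 else 0)"
  proof -
    fix e have "m e \<le> 3" using m3 by auto
    hence "m e = 0 \<or> m e = 1 \<or> m e = 2 \<or> m e = 3" by linarith
    thus "?thesis e" by auto
  qed
  have "(\<Sum>e\<in>E. m e) = card (Ei E J1 J2 J3 1) + 2 * card (Ei E J1 J2 J3 2) + 3 * card (Ei E J1 J2 J3 3)"
    unfolding cEi by (subst sum.cong[OF refl dec1]) (simp add: sum.distrib sum_distrib_left)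
  moreover have "card E = card (Ei E J1 J2 J3 0) + card (Ei E J1 J2 J3 1) + card (Ei E J1 J2 J3 2) + card (Ei E J1 J2 J3 3)"
    unfolding cEi by (subst card_eq_sum, subst sum.cong[OF refl dec2]) (simp add: sum.distrib)
  ultimately show ?thesis using sm j1 j2 j3 cV by linarith
qed

end
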